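(* Let $n\ge2$ and $d\ge1$ with $d^2\mid n-1$, and let $L_{n,d}$ be the rank two lattice with basis in which the Gram matrix is $\frac{2n-2}{d^2}\begin{pmatrix}1&0\\0&0\end{pmatrix}$. A vector $(x,y)\in L_{n,d}$ is primitive of self-intersection $2n-2$ if and only if $|x|=d$ and $\gcd(d,y)=1$. Two primitive vectors $(d,y)$ and $(d,z)$ belong to the same $O(L_{n,d})$-orbit if and only if $y\equiv z$ or $y\equiv -z$ modulo $d$. Consequently, for $d\ge 2$, the number of $O(L_{n,d})$-orbits of primitive vectors of $L_{n,d}$ of self-intersection $2n-2$ equals $\nu(d)$, where $\nu(2):=1$ and, for $d>2$, $\nu(d)$ is half the number of multiplicative units in $\mathbb{Z}/d\mathbb{Z}$. *)

theory Defs
  imports "HOL-Number_Theory.Number_Theory"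
begin

text \<open>The lattice L_{n,d} = Z^2 (vectors as int pairs, coordinates w.r.t. the given basis)
  with Gram matrix ((2n-2)/d^2) * [[1,0],[0,0]].\<close>

definition lform :: "int \<Rightarrow> int \<Rightarrow> int \<times> int \<Rightarrow> int \<times> int \<Rightarrow> int" where
  "lform n d v w = ((2*n - 2) div d^2) * fst v * fst w"

definition vadd :: "int \<times> int \<Rightarrow> int \<times> int \<Rightarrow> int \<times> int" where
  "vadd v w = (fst v + fst w, snd v + snd w)"

definition vscale :: "int \<Rightarrow> int \<times> int \<Rightarrow> int \<times> int" where
  "vscale m v = (m * fst v, m * snd v)"

definition primitive :: "int \<times> int \<Rightarrow> bool" where
  "primitive v \<longleftrightarrow> v \<noteq> (0,0) \<and> (\<forall>m w. v = vscale m w \<longrightarrow> m = 1 \<or> m = -1)"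

definition OL :: "int \<Rightarrow> int \<Rightarrow> (int \<times> int \<Rightarrow> int \<times> int) set" where
  "OL n d = {g. bij g \<and> (\<forall>v w. g (vadd v w) = vadd (g v) (g w))
               \<and> (\<forall>v w. lform n d (g v) (g w) = lform n d v w)}"

definition prim_vecs :: "int \<Rightarrow> int \<Rightarrow> (int \<times> int) set" where
  "prim_vecs n d = {v. primitive v \<and> lform n d v v = 2*n - 2}"

definition orbits :: "int \<Rightarrow> int \<Rightarrow> (int \<times> int) set set" where
  "orbits n d = {{g v | g. g \<in> OL n d} | v. v \<in> prim_vecs n d}"

definition nu :: "nat \<Rightarrow> nat" where
  "nu d = (if d = 2 then 1 else totient d div 2)"

end

theory Submission
  imports Defs
begin

lemma prim_iff: "primitive (x,y) \<longleftrightarrow> gcd x y = 1"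
proof
  assume p: "primitive (x,y)"
  let ?g = "gcd x y"
  have "(x,y) = vscale ?g (x div ?g, y div ?g)" by (simp add: vscale_def)
  hence "?g = 1 \<or> ?g = -1" using p unfolding primitive_def by blast
  moreover have "?g \<ge> 0" by simp
  ultimately show "?g = 1" by linarith
next
  assume g: "gcd x y = 1"
  have "(x,y) \<noteq> (0,0)" using g by auto
  moreover have "m = 1 \<or> m = -1" if "(x,y) = vscale m w" for m w
  proof -
    have "m dvd x" "m dvd y" using that by (auto simp: vscale_def)
    hence "m dvd 1" using g by (metis gcd_greatest)
    thus ?thesis by (simp add: zdvd1_eq abs_if split: if_splits; linarith)
  qed
  ultimately show "primitive (x,y)" unfolding primitive_def by blast
qed

lemma OL_mem:
  assumes a: "a = 1 \<or> a = -1" and e: "e = 1 \<or> e = -1"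
  shows "(\<lambda>v. (a*fst v, c*fst v + e*snd v)) \<in> OL n d"
proof -
  let ?g = "\<lambda>v. (a*fst v, c*fst v + e*snd v)"
  let ?h = "\<lambda>v. (a*fst v, (-(e*c*a))*fst v + e*snd v)"
  have aa: "a*a = 1" and ee: "e*e = 1" using a e by auto
  have "?g \<circ> ?h = id"
  proof
    fix v :: "int \<times> int"
    have "c*(a*fst v) + e*((-(e*c*a))*fst v + e*snd v) = (c*a - (e*e)*c*a)*fst v + (e*e)*snd v"
      by (simp add: algebra_simps)
    also have "\<dots> = snd v" using ee by simp
    finally show "(?g \<circ> ?h) v = id v" using aa by (simp add: mult.assoc[symmetric])
  qed
  moreover have "?h \<circ> ?g = id"
  proof
    fix v :: "int \<times> int"
    have "(-(e*c*a))*(a*fst v) + e*(c*fst v + e*snd v) = (e*c - e*c*(a*a))*fst v + (e*e)*snd v"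
      by (simp add: algebra_simps)
    also have "\<dots> = snd v" using aa ee by simp
    finally show "(?h \<circ> ?g) v = id v" using aa by (simp add: mult.assoc[symmetric])
  qed
  ultimately have "bij ?g" using o_bij by blast
  moreover have "\<forall>v w. ?g (vadd v w) = vadd (?g v) (?g w)"
    by (simp add: vadd_def algebra_simps)
  moreover have "\<forall>v w. lform n d (?g v) (?g w) = lform n d v w"
  proof (intro allI)
    fix v w :: "int \<times> int"
    have "a*fst v * (a * fst w) = (a*a) * fst v * fst w" by (simp add: algebra_simps)
    thus "lform n d (?g v) (?g w) = lform n d v w" using aa
      by (simp add: lform_def mult.assoc)
  qed
  ultimately show ?thesis unfolding OL_def by blast
qed

lemma additive_scale:
  assumes add: "\<forall>v w. g (vadd v w) = vadd (g v) (g w)"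
  shows "g (vscale m v) = vscale m (g v)"
proof -
  have g0: "g (0,0) = (0,0)"
  proof -
    have "g (0,0) = g (vadd (0,0) (0,0))" by (simp add: vadd_def)
    also have "\<dots> = vadd (g (0,0)) (g (0,0))" using add by blast
    finally show ?thesis by (cases "g (0,0)") (simp add: vadd_def)
  qed
  have nat: "g (vscale (int k) v) = vscale (int k) (g v)" for k v
  proof (induction k)
    case 0 thus ?case using g0 by (simp add: vscale_def)
  next
    case (Suc k)
    have eq: "vscale (int (Suc k)) v = vadd v (vscale (int k) v)" by (simp add: vscale_def vadd_def algebra_simps)
    have "g (vscale (int (Suc k)) v) = vadd (g v) (vscale (int k) (g v))" using add Suc.IH unfolding eq by metis
    thus ?case by (simp add: vscale_def vadd_def algebra_simps)
  qed
  have neg: "g (vscale (-1) v) = vscale (-1) (g v)" for v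
  proof -
    have "(0,0) = g (vadd v (vscale (-1) v))" using g0 by (simp add: vadd_def vscale_def)
    also have "\<dots> = vadd (g v) (g (vscale (-1) v))" using add by blast
    finally show ?thesis
      by (cases "g v", cases "g (vscale (-1) v)") (simp add: vadd_def vscale_def)
  qed
  show ?thesis
  proof (cases "m \<ge> 0")
    case True
    then obtain k where "m = int k" by (metis nonneg_int_cases)
    thus ?thesis using nat by simp
  next
    case False
    obtain k where k: "m = - int k" using False by (intro that[of "nat (-m)"]) simp
    have "vscale m v = vscale (-1) (vscale (int k) v)" using k by (simp add: vscale_def)
    hence "g (vscale m v) = vscale (-1) (vscale (int k) (g v))" using nat neg by simp
    thus ?thesis using k by (simp add: vscale_def)
  qed
qed

lemma OL_form:
  assumes K: "(2*n - 2) div d^2 \<noteq> 0" and g: "g \<in> OL n d"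
  shows "\<exists>a c e. (a = 1 \<or> a = -1) \<and> (e = 1 \<or> e = -1) \<and> (\<forall>x y. g (x,y) = (a*x, c*x + e*y))"
proof -
  let ?K = "(2*n - 2) div d^2"
  have add: "\<forall>v w. g (vadd v w) = vadd (g v) (g w)" and bij: "bij g"
    and form: "\<forall>v w. lform n d (g v) (g w) = lform n d v w" using g by (auto simp: OL_def)
  obtain a c where ac: "g (1,0) = (a,c)" by fastforce
  obtain b e where be: "g (0,1) = (b,e)" by fastforce
  have lin: "g (x,y) = (a*x + b*y, c*x + e*y)" for x y
  proof -
    have "(x,y) = vadd (vscale x (1,0)) (vscale y (0,1))" by (simp add: vadd_def vscale_def)
    hence "g (x,y) = vadd (vscale x (g (1,0))) (vscale y (g (0,1)))"
      using add additive_scale[OF add] by metis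
    thus ?thesis using ac be by (simp add: vadd_def vscale_def algebra_simps)
  qed
  have "lform n d (g (0,1)) (g (0,1)) = lform n d (0,1) (0,1)" using form by blast
  hence "?K * b * b = 0" using be by (simp add: lform_def)
  hence b0: "b = 0" using K by simp
  have "lform n d (g (1,0)) (g (1,0)) = lform n d (1,0) (1,0)" using form by blast
  hence "?K * a * a = ?K" using ac by (simp add: lform_def)
  hence "?K * (a * a) = ?K * 1" by (simp add: mult.assoc)
  hence "a * a = 1" using K by (simp only: mult_cancel_left) simp
  hence a: "a = 1 \<or> a = -1" by (simp add: zmult_eq_1_iff)
  obtain v where "g v = (0,1)" using bij by (metis bij_pointE)
  hence "a * fst v = 0" "c * fst v + e * snd v = 1" using lin[of "fst v" "snd v"] b0 by auto
  hence "e * snd v = 1" using a by auto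
  hence e: "e = 1 \<or> e = -1" by (auto simp add: zmult_eq_1_iff)
  show ?thesis using a e lin b0 by auto
qed

definition Ob :: "int \<Rightarrow> int \<Rightarrow> (int \<times> int) set" where
  "Ob d y = {(u,z). \<bar>u\<bar> = d \<and> (d dvd z - y \<or> d dvd z + y)}"

lemma orb_eq:
  assumes K: "(2*n - 2) div d^2 \<noteq> 0" and x: "\<bar>x\<bar> = d"
  shows "{g (x,y) | g. g \<in> OL n d} = Ob d y"
proof (intro equalityI subsetI)
  fix p assume "p \<in> {g (x,y) | g. g \<in> OL n d}"
  then obtain g where g: "g \<in> OL n d" "p = g (x,y)" by blast
  then obtain a c e where ace: "a = 1 \<or> a = -1" "e = 1 \<or> e = -1" "\<forall>x y. g (x,y) = (a*x, c*x + e*y)"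
    using OL_form[OF K g(1)] by blast
  have p: "p = (a*x, c*x + e*y)" using g ace by simp
  have dx: "d dvd x" using x by (metis dvd_abs_iff dvd_refl)
  have "\<bar>a*x\<bar> = d" using ace x by auto
  moreover have "d dvd (c*x + e*y) - y \<or> d dvd (c*x + e*y) + y"
  proof (cases "e = 1")
    case True
    thus ?thesis using dx by simp
  next
    case False
    hence "e = -1" using ace by simp
    thus ?thesis using dx by simp
  qed
  ultimately show "p \<in> Ob d y" using p by (simp add: Ob_def)
next
  fix p assume "p \<in> Ob d y"
  then obtain u z where p: "p = (u,z)" "\<bar>u\<bar> = d" "d dvd z - y \<or> d dvd z + y"
    by (auto simp: Ob_def)
  define a where "a = (if u = x then 1 else -1 :: int)"
  have a: "a = 1 \<or> a = -1" "a * x = u" using p x by (auto simp: a_def abs_if split: if_splits)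
  define s where "s = (if x = d then 1 else -1 :: int)"
  have s: "x = s * d" "s * s = 1" using x by (auto simp: s_def abs_if)
  obtain e k where ek: "e = 1 \<or> e = -1" "z - e*y = d*k" using p(3)
    by (metis dvd_def diff_minus_eq_add mult_minus_left mult_1_left)
  have "c * x + e * y = z" if "c = k*s" for c
    using ek s that by (simp add: algebra_simps)
  define G where "G = (\<lambda>v. (a*fst v, (k*s)*fst v + e*snd v))"
  have "G (x,y) = p" using a p \<open>\<And>c. c = k*s \<Longrightarrow> c * x + e * y = z\<close> by (simp add: G_def)
  moreover have "G \<in> OL n d" using OL_mem a ek unfolding G_def by blast
  ultimately show "p \<in> {g (x,y) | g. g \<in> OL n d}" by blast
qed

lemma tot_count:
  fixes D :: nat assumes "D > 2"
  shows "totient D = 2 * card {k\<in>totatives D. 2*k \<le> D}"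
proof -
  let ?A = "{k\<in>totatives D. 2*k \<le> D}"
  let ?B = "{k\<in>totatives D. 2*k > D}"
  have AB: "totatives D = ?A \<union> ?B" by auto
  have disj: "?A \<inter> ?B = {}" by auto
  have mem: "D - k \<in> totatives D" if "k \<in> totatives D" for k
  proof -
    have "k > 0" "k \<le> D" "coprime k D" using that by (auto simp: in_totatives_iff)
    moreover have "k \<noteq> D"
    proof
      assume "k = D"
      hence "coprime D D" using \<open>coprime k D\<close> by simp
      thus False using assms by simp
    qed
    ultimately have kD: "k < D" by simp
    have g: "gcd (D - k) D = gcd k D" using gcd_diff2_nat[of k D] kD by linarith
    have "coprime (D - k) D" using \<open>coprime k D\<close> unfolding coprime_iff_gcd_eq_1 g .
    moreover have "D - k > 0" using kD by simp
    ultimately show ?thesis unfolding in_totatives_iff by simp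
  qed
  have half: "2*k \<noteq> D" if "k \<in> totatives D" for k
  proof
    assume h: "2*k = D"
    have "coprime k D" using that by (auto simp: in_totatives_iff)
    hence "coprime k (2*k)" using h by simp
    hence "k = 1" by simp
    thus False using h assms by simp
  qed
  have img: "?B = (\<lambda>k. D - k) ` ?A"
  proof (intro equalityI subsetI)
    fix k assume k: "k \<in> ?B"
    hence "D - k \<in> ?A" using mem by auto
    moreover have "k = D - (D - k)" using k totatives_le by force
    ultimately show "k \<in> (\<lambda>k. D - k) ` ?A" by blast
  next
    fix x assume "x \<in> (\<lambda>k. D - k) ` ?A"
    then obtain k where k: "k \<in> ?A" "x = D - k" by blast
    have "2*k < D" using k half by fastforce
    thus "x \<in> ?B" using k mem by auto
  qed
  have inj: "inj_on (\<lambda>k. D - k) ?A"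
    by (auto simp: inj_on_def dest: totatives_le)
  have fin: "finite ?A" "finite ?B" by auto
  have "card (?A \<union> ?B) = card ?A + card ?B" using card_Un_disjoint[OF fin disj] .
  hence "card (totatives D) = card ?A + card ?B" by (simp only: AB[symmetric])
  also have "card ?B = card ?A" unfolding img by (rule card_image[OF inj])
  finally show ?thesis by (simp add: totient_def)
qed

lemma Ob_alt: "Ob d y = {(u,z). \<bar>u\<bar> = d \<and> (z mod d = y mod d \<or> z mod d = (-y) mod d)}"
  by (auto simp: Ob_def mod_eq_dvd_iff)

lemma Ob_eq:
  assumes "y' mod d = y mod d \<or> y' mod d = (-y) mod d"
  shows "Ob d y' = Ob d y"
  using assms
proof
  assume h: "y' mod d = y mod d"
  hence "(-y') mod d = (-y) mod d" by (rule mod_minus_cong)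
  thus ?thesis using h unfolding Ob_alt by auto
next
  assume h: "y' mod d = (-y) mod d"
  hence "(-y') mod d = (- (-y)) mod d" by (rule mod_minus_cong)
  hence "(-y') mod d = y mod d" by simp
  thus ?thesis using h unfolding Ob_alt by auto
qed

lemma Ob_self: "(d, y) \<in> Ob d y" if "d \<ge> 0" using that by (simp add: Ob_def)

theorem lemma2p6:
  fixes n d :: int
  assumes "n \<ge> 2" and "d \<ge> 1" and "d^2 dvd n - 1"
  shows "(\<forall>x y. (primitive (x, y) \<and> lform n d (x, y) (x, y) = 2*n - 2)
                 \<longleftrightarrow> (\<bar>x\<bar> = d \<and> gcd d y = 1))
       \<and> (\<forall>y z. primitive (d, y) \<longrightarrow> primitive (d, z) \<longrightarrow>
            ((\<exists>g\<in>OL n d. g (d, y) = (d, z)) \<longleftrightarrow> ([y = z] (mod d) \<or> [y = -z] (mod d))))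
       \<and> (d \<ge> 2 \<longrightarrow> card (orbits n d) = nu (nat d))"
proof -
  obtain k where k: "n - 1 = d^2 * k" using assms(3) by (auto elim: dvdE)
  have d2: "d^2 > 0" using assms(2) by simp
  have kpos: "k > 0"
  proof (rule ccontr)
    assume "\<not> k > 0"
    hence "d^2 * k \<le> 0" using d2 by (simp add: mult_nonneg_nonpos)
    thus False using k assms(1) by linarith
  qed
  have Kdef: "(2*n - 2) div d^2 = 2*k"
  proof -
    have "2*n - 2 = d^2 * (2*k)" using k by (simp add: algebra_simps)
    thus ?thesis using d2 by simp
  qed
  have K: "(2*n - 2) div d^2 \<noteq> 0" using Kdef kpos by simp
  have P1: "(primitive (x, y) \<and> lform n d (x, y) (x, y) = 2*n - 2) \<longleftrightarrow> (\<bar>x\<bar> = d \<and> gcd d y = 1)" for x y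
  proof -
    have L: "lform n d (x,y) (x,y) = 2*k*x^2" unfolding lform_def Kdef by (simp add: power2_eq_square)
    have R: "2*n-2 = 2*k*d^2" using k by (simp add: algebra_simps)
    have "lform n d (x, y) (x, y) = 2*n - 2 \<longleftrightarrow> 2*k*x^2 = 2*k*d^2"
      by (simp only: L R)
    also have "\<dots> \<longleftrightarrow> x^2 = d^2" using kpos by simp
    also have "\<dots> \<longleftrightarrow> \<bar>x\<bar> = d" using assms(2) by (auto simp: power2_eq_iff)
    finally have e: "lform n d (x, y) (x, y) = 2*n - 2 \<longleftrightarrow> \<bar>x\<bar> = d" .
    show ?thesis unfolding e prim_iff by (metis gcd_abs1_int)
  qed
  have orb: "{g (x,y) | g. g \<in> OL n d} = Ob d y" if "\<bar>x\<bar> = d" for x y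
    using orb_eq[OF K that] .
  have P2: "((\<exists>g\<in>OL n d. g (d, y) = (d, z)) \<longleftrightarrow> ([y = z] (mod d) \<or> [y = -z] (mod d)))" for y z
  proof -
    have "(\<exists>g\<in>OL n d. g (d, y) = (d, z)) \<longleftrightarrow> (d,z) \<in> {g (d,y) | g. g \<in> OL n d}" by (auto simp: eq_commute)
    also have "\<dots> \<longleftrightarrow> (d,z) \<in> Ob d y" using orb[of d y] assms(2) by simp
    also have "\<dots> \<longleftrightarrow> (d dvd z - y \<or> d dvd z + y)" using assms(2) by (simp add: Ob_def)
    also have "\<dots> \<longleftrightarrow> ([y = z] (mod d) \<or> [y = -z] (mod d))"
      unfolding cong_iff_dvd_diff by (simp add: dvd_diff_commute add.commute)
    finally show ?thesis .
  qed
  have P3: "card (orbits n d) = nu (nat d)" if d2: "d \<ge> 2"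
  proof -
    have O1: "orbits n d = Ob d ` {y. gcd d y = 1}"
    proof (intro equalityI subsetI)
      fix S assume "S \<in> orbits n d"
      then obtain v where v: "v \<in> prim_vecs n d" "S = {g v | g. g \<in> OL n d}" by (auto simp: orbits_def)
      obtain x y where xy: "v = (x,y)" by fastforce
      have "\<bar>x\<bar> = d" "gcd d y = 1" using v(1) P1 xy by (auto simp: prim_vecs_def)
      thus "S \<in> Ob d ` {y. gcd d y = 1}" using orb v xy by auto
    next
      fix S assume "S \<in> Ob d ` {y. gcd d y = 1}"
      then obtain y where ya: "S = Ob d y" "y \<in> {y. gcd d y = 1}" by (rule imageE)
      have y: "gcd d y = 1" "S = Ob d y" using ya by (simp_all only: mem_Collect_eq)
      have "(d,y) \<in> prim_vecs n d" using P1[of d y] y assms(2) by (simp add: prim_vecs_def)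
      moreover have "S = {g (d,y) | g. g \<in> OL n d}" using orb[of d y] y assms(2) by simp
      ultimately show "S \<in> orbits n d" unfolding orbits_def by blast
    qed
    define R where "R = {y. 1 \<le> y \<and> 2*y \<le> d \<and> gcd d y = 1}"
    have O2: "Ob d ` {y. gcd d y = 1} = Ob d ` R"
    proof (intro equalityI subsetI)
      fix S assume "S \<in> Ob d ` R" thus "S \<in> Ob d ` {y. gcd d y = 1}" by (auto simp: R_def)
    next
      fix S assume "S \<in> Ob d ` {y. gcd d y = 1}"
      then obtain y0 where y0a: "S = Ob d y0" "y0 \<in> {y. gcd d y = 1}" by (rule imageE)
      have y0: "gcd d y0 = 1" "S = Ob d y0" using y0a by (simp_all only: mem_Collect_eq)
      define r where "r = y0 mod d"
      have r: "0 \<le> r" "r < d" using d2 by (auto simp: r_def)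
      have gr: "gcd d r = 1" using y0 gcd_red_int[of y0 d] by (simp add: r_def gcd.commute)
      have "r \<noteq> 0" using gr d2 by auto
      show "S \<in> Ob d ` R"
      proof (cases "2*r \<le> d")
        case True
        hence "r \<in> R" using r gr \<open>r \<noteq> 0\<close> by (auto simp: R_def)
        moreover have "Ob d r = Ob d y0" by (rule Ob_eq) (simp add: r_def)
        ultimately show ?thesis using y0 by blast
      next
        case False
        have "gcd d (d - r) = 1" using gcd_diff2[of d r] gr by (simp add: gcd.commute)
        hence "d - r \<in> R" using r False by (auto simp: R_def)
        moreover have "Ob d (d - r) = Ob d y0"
        proof (rule Ob_eq)
          have "(d - r) mod d = (- r) mod d" by (simp add: mod_diff_eq[symmetric] )
          also have "\<dots> = (- y0) mod d" unfolding r_def by (simp add: mod_minus_eq)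
          finally show "(d - r) mod d = y0 mod d \<or> (d - r) mod d = (- y0) mod d" by simp
        qed
        ultimately show ?thesis using y0 by blast
      qed
    qed
    have inj: "inj_on (Ob d) R"
    proof (rule inj_onI)
      fix y y' assume y: "y \<in> R" and y': "y' \<in> R" and eq: "Ob d y = Ob d y'"
      have "(d, y') \<in> Ob d y" using eq Ob_self[of d y'] d2 by simp
      hence "d dvd y' - y \<or> d dvd y' + y" by (simp add: Ob_def)
      thus "y = y'"
      proof
        assume h: "d dvd y' - y"
        show ?thesis
        proof (rule ccontr)
          assume "y \<noteq> y'"
          hence "\<bar>d\<bar> \<le> \<bar>y' - y\<bar>" using dvd_imp_le_int[OF _ h] by simp
          thus False using y y' by (auto simp: R_def)
        qed
      next
        assume h: "d dvd y' + y"
        have "y' + y \<noteq> 0" using y y' by (auto simp: R_def)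
        hence "\<bar>d\<bar> \<le> \<bar>y' + y\<bar>" using dvd_imp_le_int[OF _ h] by simp
        thus ?thesis using y y' by (auto simp: R_def)
      qed
    qed
    define A where "A = {k\<in>totatives (nat d). 2*k \<le> nat d}"
    have RA: "R = int ` A"
    proof (intro equalityI subsetI)
      fix y assume y: "y \<in> R"
      hence y1: "1 \<le> y" "2*y \<le> d" "coprime d y" by (auto simp: R_def)
      have "coprime (int (nat y)) (int (nat d))" using y1 d2 by (simp add: coprime_commute)
      hence "coprime (nat y) (nat d)" by (simp only: coprime_int_iff)
      moreover have "0 < nat y" "nat y \<le> nat d" "2 * nat y \<le> nat d" using y1 by auto
      ultimately have "nat y \<in> A" by (simp add: A_def in_totatives_iff)
      moreover have "y = int (nat y)" using y1 by simp
      ultimately show "y \<in> int ` A" by blast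
    next
      fix y assume "y \<in> int ` A"
      then obtain k where kA: "k \<in> A" "y = int k" by blast
      hence k1: "0 < k" "2*k \<le> nat d" "coprime k (nat d)"
        by (auto simp: A_def in_totatives_iff)
      have "coprime (int k) (int (nat d))" using k1 by (simp only: coprime_int_iff)
      hence "coprime d (int k)" using d2 by (simp add: coprime_commute)
      moreover have "1 \<le> int k" "2 * int k \<le> d" using k1 d2 by auto
      ultimately show "y \<in> R" using kA by (simp add: R_def)
    qed
    have "card (orbits n d) = card R" using O1 O2 inj by (simp add: card_image)
    also have "\<dots> = card A" using RA by (simp add: card_image)
    also have "\<dots> = nu (nat d)"
    proof (cases "d = 2")
      case True
      have "A = {1}" using True by (auto simp: A_def in_totatives_iff)
      thus ?thesis using True by (simp add: nu_def)
    next
      case False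
      hence "nat d > 2" using d2 by simp
      thus ?thesis using tot_count[of "nat d"] by (simp add: nu_def A_def)
    qed
    finally show ?thesis .
  qed
  show ?thesis using P1 P2 P3 by blast
qed

end
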